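(* Let $a\in\mathbb{R}\cup\{-\infty\}$, $b\in\mathbb{R}\cup\{+\infty\}$, $a<b$, and let $\gamma:[a,b)\to\mathbb{E}^2$ be a continuous parametric curve in the Euclidean plane (continuity at $a=-\infty$ being understood in the order topology of the extended real line) which is not constant on any neighborhood of the point $a$. For $t\in[a,b)$ let $D(t)$ be the Euclidean distance between $\gamma(a)$ and $\gamma(t)$. For $t\in(a,b)$ let $S(t)$ be the set of all $\tau\in(a,t]$ such that $\gamma(\tau)$ is a support point for the chord $[\gamma(a),\gamma(t)]$, and let $DS(t)=\sup\{D(\tau)\,:\,\tau\in S(t)\}$; when $D(t)=0$ set $DS(t)/D(t)=+\infty$. Then $$\varlimsup_{t\to a}\frac{DS(t)}{D(t)}\ \geq\ \frac{1}{e}.$$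
   Context: Support points: let $\gamma:I\to\mathbb{E}^2$ be a continuous curve on an interval $I$ and $[c,d]\subset I$. If $\gamma(c)\neq\gamma(d)$, a point $\gamma(\tau_0)$ with $\tau_0\in[c,d]$ is called a support point for the chord $[\gamma(c),\gamma(d)]$ if the straight line $l$ through $\gamma(\tau_0)$ parallel to the segment $[\gamma(c),\gamma(d)]$ has the property that for all $\tau\in I$ sufficiently close to $\tau_0$ the points $\gamma(\tau)$ lie in one and the same (closed) half-plane determined by $l$; equivalently, $\tau_0$ is a point of local extremum of $\tau\mapsto\det\bigl(\gamma(d)-\gamma(c),\ \gamma(\tau)\bigr)$ (determinant of the $2\times2$ matrix with these rows, in Cartesian coordinates). If $\gamma(c)=\gamma(d)$, then by convention every point $\gamma(\tau_0)$ with $\tau_0\in[c,d]$ is a support point for the (degenerate) chord $[\gamma(c),\gamma(d)]$. *)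

theory Defs
  imports "HOL-Analysis.Analysis" "HOL-Library.Extended_Real"
begin

definition det2 :: "real^2 \<Rightarrow> real^2 \<Rightarrow> real" where
  "det2 u v = u$1 * v$2 - u$2 * v$1"

text \<open>Degenerate chords: every point is a support point.\<close>
definition support_point ::
  "(ereal \<Rightarrow> real^2) \<Rightarrow> ereal set \<Rightarrow> ereal \<Rightarrow> ereal \<Rightarrow> ereal \<Rightarrow> bool" where
  "support_point \<gamma> I c d \<tau>0 \<longleftrightarrow> \<tau>0 \<in> {c..d} \<and>
     (\<gamma> c = \<gamma> d \<or>
      (\<forall>\<^sub>F \<tau> in at \<tau>0 within I. det2 (\<gamma> d - \<gamma> c) (\<gamma> \<tau>) \<le> det2 (\<gamma> d - \<gamma> c) (\<gamma> \<tau>0)) \<or>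
      (\<forall>\<^sub>F \<tau> in at \<tau>0 within I. det2 (\<gamma> d - \<gamma> c) (\<gamma> \<tau>) \<ge> det2 (\<gamma> d - \<gamma> c) (\<gamma> \<tau>0)))"

definition supp_set :: "(ereal \<Rightarrow> real^2) \<Rightarrow> ereal \<Rightarrow> ereal \<Rightarrow> ereal \<Rightarrow> ereal set" where
  "supp_set \<gamma> a b t = {\<tau> \<in> {a<..t}. support_point \<gamma> {a..<b} a t \<tau>}"

definition DS :: "(ereal \<Rightarrow> real^2) \<Rightarrow> ereal \<Rightarrow> ereal \<Rightarrow> ereal \<Rightarrow> real" where
  "DS \<gamma> a b t = Sup ((\<lambda>\<tau>. dist (\<gamma> a) (\<gamma> \<tau>)) ` supp_set \<gamma> a b t)"

definition ratio_DS_D :: "(ereal \<Rightarrow> real^2) \<Rightarrow> ereal \<Rightarrow> ereal \<Rightarrow> ereal \<Rightarrow> ereal" where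
  "ratio_DS_D \<gamma> a b t =
     (if dist (\<gamma> a) (\<gamma> t) = 0 then \<infinity> else ereal (DS \<gamma> a b t / dist (\<gamma> a) (\<gamma> t)))"

end

theory Submission imports Defs begin

lemma sin_ratio:
  fixes A B :: real
  assumes "0 < B" "B \<le> A" "A \<le> pi"
  shows "B * sin A \<le> A * sin B"
proof -
  have k: "x * cos x \<le> sin x" if "0 \<le> x" "x \<le> pi" for x :: real
  proof -
    have "(\<lambda>x. sin x - x * cos x) 0 \<le> (\<lambda>x. sin x - x * cos x) x"
    proof (rule DERIV_nonneg_imp_nondecreasing[OF \<open>0 \<le> x\<close>])
      fix y assume y: "0 \<le> y" "y \<le> x"
      have "0 \<le> sin y" using y that by (intro sin_ge_zero) auto
      then have "0 \<le> y * sin y" using y by simp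
      then show "\<exists>d. ((\<lambda>x. sin x - x * cos x) has_real_derivative d) (at y) \<and> 0 \<le> d"
        apply (intro exI[of _ "y * sin y"] conjI)
         apply (rule derivative_eq_intros refl | simp)+
        done
    qed
    then show ?thesis by simp
  qed
  have "(\<lambda>x. sin x / x) A \<le> (\<lambda>x. sin x / x) B"
  proof (rule DERIV_nonpos_imp_nonincreasing[OF \<open>B \<le> A\<close>])
    fix y assume y: "B \<le> y" "y \<le> A"
    then have y0: "y \<noteq> 0" using assms by auto
    have "(y * cos y - sin y) / y^2 \<le> 0"
      using k[of y] y assms by (simp add: divide_nonpos_pos)
    moreover have "((\<lambda>x. sin x / x) has_real_derivative (y * cos y - sin y) / y^2) (at y)"
      apply (rule derivative_eq_intros refl | simp add: y0)+
      apply (simp add: field_simps power2_eq_square y0)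
      done
    ultimately show "\<exists>d. ((\<lambda>x. sin x / x) has_real_derivative d) (at y) \<and> d \<le> 0"
      by blast
  qed
  then have "sin A / A \<le> sin B / B" by simp
  then show ?thesis using assms by (simp add: field_simps)
qed

definition locext :: "(real \<Rightarrow> real) \<Rightarrow> real \<Rightarrow> bool" where
  "locext f x \<longleftrightarrow> (\<forall>\<^sub>F y in at x. f y \<le> f x) \<or> (\<forall>\<^sub>F y in at x. f x \<le> f y)"

lemma eventually_at_open_in: "open S \<Longrightarrow> x \<in> S \<Longrightarrow> \<forall>\<^sub>F y in at x. y \<in> S"
  unfolding eventually_at_topological by auto

lemma locext_uminus: "locext (\<lambda>x. - f x) x \<Longrightarrow> locext f x"
  unfolding locext_def by auto

lemma locext_exists:
  fixes f :: "real \<Rightarrow> real"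
  assumes xy: "x < y" and cont: "continuous_on {x..y} f" and eq: "f x = f y"
  shows "\<exists>\<tau>\<in>{x<..<y}. locext f \<tau>"
proof -
  obtain M where M: "M \<in> {x..y}" "\<forall>w\<in>{x..y}. f w \<le> f M"
    using continuous_attains_sup[OF compact_Icc _ cont] xy by auto
  obtain m where m: "m \<in> {x..y}" "\<forall>w\<in>{x..y}. f m \<le> f w"
    using continuous_attains_inf[OF compact_Icc _ cont] xy by auto
  show ?thesis
  proof (cases "M \<in> {x<..<y}")
    case True
    have "\<forall>\<^sub>F w in at M. w \<in> {x<..<y}" using True eventually_at_open_in[of "{x<..<y}" M] by auto
    then have "\<forall>\<^sub>F w in at M. f w \<le> f M" by eventually_elim (use M in auto)
    then show ?thesis using True unfolding locext_def by blast
  next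
    case False
    show ?thesis
    proof (cases "m \<in> {x<..<y}")
      case True
      have "\<forall>\<^sub>F w in at m. w \<in> {x<..<y}" using True eventually_at_open_in[of "{x<..<y}" m] by auto
      then have "\<forall>\<^sub>F w in at m. f m \<le> f w" by eventually_elim (use m in auto)
      then show ?thesis using True unfolding locext_def by blast
    next
      case False2: False
      have fM: "f M = f x" using False M eq by (cases "M = x") auto
      have fm: "f m = f x" using False2 m eq by (cases "m = x") auto
      let ?c = "(x+y)/2"
      have c: "?c \<in> {x<..<y}" using xy by auto
      have "\<forall>\<^sub>F w in at ?c. w \<in> {x<..<y}" using c eventually_at_open_in[of "{x<..<y}" ?c] by auto
      then have "\<forall>\<^sub>F w in at ?c. f w \<le> f ?c"
      proof eventually_elim
        case (elim w)
        then have "f w \<le> f M" "f m \<le> f ?c" using M m c by auto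
        then show ?case using fM fm by simp
      qed
      then show ?thesis using c unfolding locext_def by blast
    qed
  qed
qed

locale core =
  fixes p q L :: real and z g :: "real \<Rightarrow> complex"
  assumes pq: "p < q"
  and zcont: "continuous_on {p<..q} z"
  and zlim: "(z \<longlongrightarrow> 0) (at_right p)"
  and gcont: "continuous_on {p<..q} g"
  and zg: "\<And>x. x \<in> {p<..q} \<Longrightarrow> z x = exp (g x)"
  and thmono: "strict_mono_on {p<..<q} (\<lambda>x. Im (g x))"
  and L1: "1 < L"
  and N: "\<And>t \<tau>. t \<in> {p<..<q} \<Longrightarrow> \<tau> \<in> {p<..t} \<Longrightarrow> Re (g t) - L \<le> Re (g \<tau>)
           \<Longrightarrow> \<not> locext (\<lambda>x. Im (cnj (z t) * z x)) \<tau>"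
begin

abbreviation u :: "real \<Rightarrow> real" where "u x \<equiv> Re (g x)"
abbreviation th :: "real \<Rightarrow> real" where "th x \<equiv> Im (g x)"
abbreviation F :: "real \<Rightarrow> real \<Rightarrow> real" where "F t x \<equiv> Im (cnj (z t) * z x)"

definition Win :: "real \<Rightarrow> real \<Rightarrow> bool" where
  "Win s t \<longleftrightarrow> p < s \<and> s \<le> t \<and> t < q \<and> (\<forall>x\<in>{s..t}. u t - L \<le> u x)"

definition Pw :: "real \<Rightarrow> real \<Rightarrow> bool" where
  "Pw x w \<longleftrightarrow> (\<forall>t. Win x t \<longrightarrow> th t - th x \<le> w)"

lemma F_eq:
  assumes "x \<in> {p<..q}" "t \<in> {p<..q}"
  shows "F t x = exp (u t + u x) * sin (th x - th t)"
proof -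
  have "cnj (z t) * z x = exp (cnj (g t) + g x)" using zg assms by (simp add: exp_cnj exp_add)
  then show ?thesis by (simp add: Im_exp algebra_simps)
qed

lemma cont_u: "continuous_on {p<..q} u"
  using gcont by (intro continuous_intros)

lemma cont_th: "continuous_on {p<..q} th"
  using gcont by (intro continuous_intros)

lemma cont_F: "continuous_on {p<..q} (F t)"
  using zcont by (intro continuous_intros)

lemma th_less: "x \<in> {p<..<q} \<Longrightarrow> y \<in> {p<..<q} \<Longrightarrow> x < y \<Longrightarrow> th x < th y"
  using thmono by (auto intro: strict_mono_onD)

lemma th_le: "x \<in> {p<..<q} \<Longrightarrow> y \<in> {p<..<q} \<Longrightarrow> x \<le> y \<Longrightarrow> th x \<le> th y"
  using th_less by (cases "x = y") (auto intro: less_imp_le)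

lemma th_less_rev: "x \<in> {p<..<q} \<Longrightarrow> y \<in> {p<..<q} \<Longrightarrow> th x < th y \<Longrightarrow> x < y"
  using th_le by (meson not_le)

lemma Win_sub: "Win s t \<Longrightarrow> s \<le> s' \<Longrightarrow> s' \<le> t \<Longrightarrow> Win s' t"
  by (auto simp: Win_def)

lemma Win_inj:
  assumes "Win s t"
  shows "inj_on (F t) {s..t}"
proof (rule inj_onI, rule ccontr)
  fix x y assume xy: "x \<in> {s..t}" "y \<in> {s..t}" "F t x = F t y" "x \<noteq> y"
  have W: "p < s" "s \<le> t" "t < q" "\<forall>x\<in>{s..t}. u t - L \<le> u x" using assms by (auto simp: Win_def)
  have key: "False" if k1: "x' < y'" and k2: "x' \<in> {s..t}" "y' \<in> {s..t}" and k4: "F t x' = F t y'" for x' y'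
  proof -
    have "continuous_on {x'..y'} (F t)" by (rule continuous_on_subset[OF cont_F]) (use that W in auto)
    then obtain \<tau> where \<tau>: "\<tau> \<in> {x'<..<y'}" "locext (F t) \<tau>" using locext_exists[OF k1 _ k4] by blast
    have "t \<in> {p<..<q}" "\<tau> \<in> {p<..t}" "u t - L \<le> u \<tau>" using W \<tau> k1 k2 \<open>y' \<in> {s..t}\<close> by auto
    then show False using N \<tau>(2) by blast
  qed
  from xy(4) have "x < y \<or> y < x" by auto
  then show False using key[of x y] key[of y x] xy by auto
qed

lemma Win_pi:
  assumes "Win s t"
  shows "th t - th s < pi"
proof (rule ccontr)
  assume nt: "\<not> ?thesis"
  have W: "p < s" "s \<le> t" "t < q" using assms by (auto simp: Win_def)
  have cth: "continuous_on {s..t} th" by (rule continuous_on_subset[OF cont_th]) (use W in auto)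
  obtain x where x: "s \<le> x" "x \<le> t" "th x = th t - pi"
    using IVT'[of th s "th t - pi" t, OF _ _ _ cth] nt W by auto
  have "x \<noteq> t" using x(3) pi_gt_zero by auto
  have "F t x = 0" using F_eq[of x t] x W by simp
  moreover have "F t t = 0" using F_eq[of t t] W by simp
  ultimately show False using inj_onD[OF Win_inj[OF assms], of x t] x W \<open>x \<noteq> t\<close> by auto
qed

lemma Win_incr:
  assumes "Win s t" "s \<le> x" "x < y" "y < t"
  shows "F t x < F t y"
proof -
  have W: "p < s" "s \<le> t" "t < q" using assms by (auto simp: Win_def)
  have inj: "inj_on (F t) {x..t}" by (rule inj_on_subset[OF Win_inj[OF assms(1)]]) (use assms in auto)
  have cont: "continuous_on {x..t} (F t)" by (rule continuous_on_subset[OF cont_F]) (use assms W in auto)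
  have "(F t x < F t y \<and> F t y < F t t) \<or> (F t t < F t y \<and> F t y < F t x)"
    using continuous_inj_imp_mono[OF assms(3) assms(4) cont inj] .
  moreover have "F t y < 0"
  proof -
    have "th y < th t" using th_less[of y t] assms W by auto
    moreover have "th t - th y < pi" using Win_pi[OF Win_sub[OF assms(1), of y]] assms by auto
    ultimately have "sin (th t - th y) > 0" by (intro sin_gt_zero) auto
    moreover have "sin (th y - th t) = - sin (th t - th y)" by (metis minus_diff_eq sin_minus)
    then have "F t y = - (exp (u t + u y) * sin (th t - th y))"
      using F_eq[of y t] assms W by simp
    ultimately show ?thesis by simp
  qed
  moreover have "F t t = 0" using F_eq[of t t] W by simp
  ultimately show ?thesis by auto
qed

lemma Win_log:
  assumes "Win s t" "s \<le> x" "x < y" "y < t"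
  shows "u y - u x < ln ((th t - th x) / (th t - th y))"
proof -
  define A where "A = th t - th x"
  define B where "B = th t - th y"
  have W: "p < s" "s \<le> t" "t < q" using assms by (auto simp: Win_def)
  have "th x < th y" "th y < th t" using th_less assms W by auto
  then have B0: "0 < B" "B < A" by (auto simp: A_def B_def)
  have Api: "A < pi" using Win_pi[OF Win_sub[OF assms(1), of x]] assms by (auto simp: A_def)
  have "F t x < F t y" using Win_incr[OF assms] .
  then have "exp (u t + u x) * sin (- A) < exp (u t + u y) * sin (- B)"
    using F_eq[of x t] F_eq[of y t] assms W by (simp add: A_def B_def)
  then have "exp (u t) * (exp (u y) * sin B) < exp (u t) * (exp (u x) * sin A)"
    by (simp add: exp_add algebra_simps)
  then have 1: "exp (u y) * sin B < exp (u x) * sin A"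
    by (simp add: mult_less_cancel_left_pos)
  have sB: "0 < sin B" using B0 Api by (intro sin_gt_zero) auto
  have "B * sin A \<le> A * sin B" using sin_ratio[of B A] B0 Api by auto
  then have "sin A \<le> A / B * sin B" using B0 by (simp add: field_simps)
  then have "exp (u x) * sin A \<le> exp (u x) * (A / B * sin B)" by (rule mult_left_mono) auto
  with 1 have "exp (u y) * sin B < (exp (u x) * (A / B)) * sin B" by (simp add: algebra_simps)
  then have "exp (u y) < exp (u x) * (A / B)" using sB by (metis mult_less_cancel_right_pos)
  then have "exp (u y - u x) < A / B" by (simp add: exp_diff field_simps)
  moreover have "0 < A / B" using B0 by simp
  ultimately have "ln (exp (u y - u x)) < ln (A / B)" by (subst ln_less_cancel_iff) auto
  then show ?thesis by (simp add: A_def B_def)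
qed

lemma th_inj: "x \<in> {p<..<q} \<Longrightarrow> y \<in> {p<..<q} \<Longrightarrow> th x = th y \<Longrightarrow> x = y"
  using th_less by (metis linorder_neq_iff less_irrefl)

lemma cont_pair:
  assumes "p < x" "t0 < q"
  shows "continuous_on ({x..t0} \<times> {x..t0}) (\<lambda>y. u (fst y))"
    "continuous_on ({x..t0} \<times> {x..t0}) (\<lambda>y. u (snd y))"
    "continuous_on ({x..t0} \<times> {x..t0}) (\<lambda>y. th (fst y))"
    "continuous_on ({x..t0} \<times> {x..t0}) (\<lambda>y. th (snd y))"
proof -
  have cu: "continuous_on {x..t0} u" by (rule continuous_on_subset[OF cont_u]) (use assms in auto)
  have ct: "continuous_on {x..t0} th" by (rule continuous_on_subset[OF cont_th]) (use assms in auto)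
  show "continuous_on ({x..t0} \<times> {x..t0}) (\<lambda>y. u (fst y))"
    by (rule continuous_on_compose2[OF cu continuous_on_fst[OF continuous_on_id]]) auto
  show "continuous_on ({x..t0} \<times> {x..t0}) (\<lambda>y. u (snd y))"
    by (rule continuous_on_compose2[OF cu continuous_on_snd[OF continuous_on_id]]) auto
  show "continuous_on ({x..t0} \<times> {x..t0}) (\<lambda>y. th (fst y))"
    by (rule continuous_on_compose2[OF ct continuous_on_fst[OF continuous_on_id]]) auto
  show "continuous_on ({x..t0} \<times> {x..t0}) (\<lambda>y. th (snd y))"
    by (rule continuous_on_compose2[OF ct continuous_on_snd[OF continuous_on_id]]) auto
qed

lemma Kcompact:
  assumes "p < x" "t0 < q"
  shows "compact {y \<in> {x..t0} \<times> {x..t0}. u (fst y) + L \<le> u (snd y) \<and> fst y \<le> snd y}"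
proof -
  define S where "S = {x..t0} \<times> {x..t0}"
  define K where "K = {y \<in> S. u (fst y) + L \<le> u (snd y)}"
  have cS: "closed S" unfolding S_def by (intro closed_Times) auto
  have "closed K" unfolding K_def
    by (rule continuous_on_closed_Collect_le) (use cont_pair[OF assms] cS in \<open>auto simp: S_def intro!: continuous_intros\<close>)
  moreover have "continuous_on K fst" "continuous_on K snd"
    by (auto intro!: continuous_intros)
  ultimately have "closed {y \<in> K. fst y \<le> snd y}"
    by (intro continuous_on_closed_Collect_le) auto
  moreover have "compact S" unfolding S_def by (intro compact_Times) auto
  ultimately have "compact (S \<inter> {y \<in> K. fst y \<le> snd y})" by auto
  also have "S \<inter> {y \<in> K. fst y \<le> snd y} = {y \<in> {x..t0} \<times> {x..t0}. u (fst y) + L \<le> u (snd y) \<and> fst y \<le> snd y}"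
    by (auto simp: S_def K_def)
  finally show ?thesis .
qed

lemma crossing:
  assumes x: "p < x" "x \<le> t0" "t0 < q" "u x + L \<le> u t0"
  shows "\<exists>\<mu> \<nu>. x \<le> \<mu> \<and> \<mu> < \<nu> \<and> \<nu> \<le> t0 \<and> Win x \<nu> \<and> u \<nu> - u \<mu> = L"
proof -
  define K where "K = {y \<in> {x..t0} \<times> {x..t0}. u (fst y) + L \<le> u (snd y) \<and> fst y \<le> snd y}"
  have cK: "compact K" unfolding K_def using Kcompact x by auto
  have "(x, t0) \<in> K" using x by (auto simp: K_def)
  then have ne: "snd ` K \<noteq> {}" by auto
  have "compact (snd ` K)" by (rule compact_continuous_image[OF _ cK]) (auto intro!: continuous_intros)
  then obtain \<nu> where \<nu>: "\<nu> \<in> snd ` K" "\<forall>y\<in>snd ` K. \<nu> \<le> y"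
    using compact_attains_inf[OF _ ne] by blast
  then obtain \<mu> where \<mu>: "(\<mu>, \<nu>) \<in> K" by auto
  then have mn: "x \<le> \<mu>" "\<mu> \<le> \<nu>" "\<nu> \<le> t0" "u \<mu> + L \<le> u \<nu>" by (auto simp: K_def)
  have W: "\<forall>y\<in>{x..\<nu>}. u \<nu> - L \<le> u y"
  proof (rule ballI, rule ccontr)
    fix y assume y: "y \<in> {x..\<nu>}" and ny: "\<not> u \<nu> - L \<le> u y"
    have yn: "y < \<nu>" using y ny L1 by (cases "y = \<nu>") auto
    have cu: "continuous_on {y..\<nu>} u" by (rule continuous_on_subset[OF cont_u]) (use x y mn in auto)
    obtain t where t: "y \<le> t" "t \<le> \<nu>" "u t = u y + L"
      using IVT'[of u y "u y + L" \<nu>, OF _ _ _ cu] ny L1 yn by auto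
    have "t \<noteq> \<nu>" using t ny by auto
    have "(y, t) \<in> K" using t y mn by (auto simp: K_def)
    then have "\<nu> \<le> t" using \<nu>(2) by force
    then show False using t \<open>t \<noteq> \<nu>\<close> by auto
  qed
  have "Win x \<nu>" using W x mn by (auto simp: Win_def)
  moreover have "u \<nu> - u \<mu> = L" using W mn by force
  moreover have "\<mu> < \<nu>" using mn L1 by (cases "\<mu> = \<nu>") auto
  ultimately show ?thesis using mn by blast
qed

lemma step:
  assumes x: "p < x" "x \<le> t0" "t0 < q" "u x + L \<le> u t0" and Pw: "Pw x w" and L': "1 < L'" "L' < L"
  shows "\<exists>m. x \<le> m \<and> m \<le> t0 \<and> th m \<le> th x + w \<and> Pw m (w / L')"
proof -
  obtain \<mu> \<nu> where mn: "x \<le> \<mu>" "\<mu> < \<nu>" "\<nu> \<le> t0" "Win x \<nu>" "u \<nu> - u \<mu> = L"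
    using crossing[OF x] by blast
  have inI: "\<And>y. y \<in> {x..t0} \<Longrightarrow> y \<in> {p<..<q}" using x by auto
  define D where "D = th \<nu> - th \<mu>"
  have D0: "0 < D" using th_less[of \<mu> \<nu>] mn x inI by (auto simp: D_def)
  have thn: "th \<nu> - th x \<le> w" using Pw mn(4) by (auto simp: Pw_def)
  moreover have "th x \<le> th \<mu>" using th_le[of x \<mu>] mn x by auto
  ultimately have Dw: "D \<le> w" by (simp add: D_def)
  have "\<exists>m\<in>{\<mu>..\<nu>}. Pw m (D / L')"
  proof (rule ccontr)
    assume "\<not> ?thesis"
    then have ex: "\<forall>m\<in>{\<mu>..\<nu>}. \<exists>t. Win m t \<and> th t - th m > D / L'" by (auto simp: Pw_def not_le)
    define r where "r = L * L' / (L - L')"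
    define n :: nat where "n = nat \<lceil>r\<rceil> + 1"
    have r0: "L' < r" unfolding r_def using L' by (simp add: field_simps)
    have nr: "r + 1 \<le> real n" unfolding n_def by (simp add: real_nat_ceiling_ge)
    have nL': "L' < real n" using r0 nr by simp
    have n0: "0 < n" using nL' L' by simp
    have n1: "L * L' \<le> real n * (L - L')"
    proof -
      have "r \<le> real n" using nr by simp
      then show ?thesis unfolding r_def using L' by (simp add: field_simps)
    qed
    have "\<forall>k\<in>{..n}. \<exists>m. m \<in> {\<mu>..\<nu>} \<and> th m = th \<mu> + real k * D / real n"
    proof
      fix k assume k: "k \<in> {..n}"
      have ct: "continuous_on {\<mu>..\<nu>} th" by (rule continuous_on_subset[OF cont_th]) (use x mn in auto)
      have "real k * D / real n \<le> D" using k n0 D0 by (simp add: field_simps mult_right_mono)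
      moreover have "0 \<le> real k * D / real n" using D0 by simp
      ultimately show "\<exists>m. m \<in> {\<mu>..\<nu>} \<and> th m = th \<mu> + real k * D / real n"
        using IVT'[of th \<mu> "th \<mu> + real k * D / real n" \<nu>, OF _ _ _ ct] mn by (auto simp: D_def)
    qed
    then have "\<exists>pt. \<forall>k\<in>{..n}. pt k \<in> {\<mu>..\<nu>} \<and> th (pt k) = th \<mu> + real k * D / real n"
      by (rule bchoice)
    then obtain pt where pt: "\<forall>k\<in>{..n}. pt k \<in> {\<mu>..\<nu>} \<and> th (pt k) = th \<mu> + real k * D / real n"
      by (elim exE)
    have ptI: "pt k \<in> {p<..<q}" if "k \<le> n" for k
    proof -
      have "pt k \<in> {\<mu>..\<nu>}" using pt that by auto
      then show ?thesis using inI mn by auto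
    qed
    have pt0: "pt 0 = \<mu>" using th_inj[of "pt 0" \<mu>] ptI[of 0] pt inI mn by auto
    have ptn: "pt n = \<nu>" using th_inj[of "pt n" \<nu>] ptI[of n] pt inI mn n0 by (auto simp: D_def)
    have tm: "u (pt (Suc k)) - u (pt k) < L' / (real n - L')" if k: "k < n" for k
    proof -
      define a where "a = pt k"
      define b where "b = pt (Suc k)"
      have a: "a \<in> {\<mu>..\<nu>}" "th a = th \<mu> + real k * D / real n" using pt k by (auto simp: a_def)
      have b: "b \<in> {\<mu>..\<nu>}" "th b = th \<mu> + real (Suc k) * D / real n" using pt k by (auto simp: b_def)
      have thab: "th b = th a + D / real n" using a(2) b(2) by (simp add: add_divide_distrib ring_distribs)
      obtain t where t: "Win a t" "th t - th a > D / L'" using ex a by blast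
      have tq: "t < q" "a \<le> t" using t by (auto simp: Win_def)
      have aI: "a \<in> {p<..<q}" "b \<in> {p<..<q}" using ptI k by (auto simp: a_def b_def)
      have tI: "t \<in> {p<..<q}" using tq aI by auto
      have Dn: "D / real n < D / L'" using D0 nL' L' by (intro divide_strict_left_mono) auto
      have Dn0: "0 < D / real n" using D0 n0 by simp
      have ab: "a < b" using th_less_rev[OF aI] thab Dn0 by auto
      have bt: "b < t" using th_less_rev[OF aI(2) tI] thab Dn t by auto
      have lg: "u b - u a < ln ((th t - th a) / (th t - th b))"
        using Win_log[OF t(1) order_refl ab bt] .
      define A where "A = th t - th a"
      have A: "A > D / L'" using t by (simp add: A_def)
      have tb: "th t - th b = A - D / real n" using thab by (simp add: A_def)
      have pos: "A - D / real n > 0" using Dn A by simp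
      have pos2: "D / L' - D / real n > 0" using Dn by simp
      have "ln (A / (A - D / real n)) \<le> A / (A - D / real n) - 1"
        using pos A Dn0 by (intro ln_le_minus_one) auto
      also have "\<dots> = (D / real n) / (A - D / real n)" using pos by (simp add: field_simps)
      also have "\<dots> < (D / real n) / (D / L' - D / real n)"
        using pos2 A Dn0 by (intro divide_strict_left_mono) auto
      also have "\<dots> = L' / (real n - L')" using D0 n0 L' nL' by (simp add: field_simps)
      finally have ln1: "ln (A / (A - D / real n)) < L' / (real n - L')" .
      have eqln: "ln ((th t - th a) / (th t - th b)) = ln (A / (A - D / real n))"
        unfolding tb A_def by (rule refl)
      have "u b - u a < L' / (real n - L')" using lg eqln ln1 by linarith
      then show ?thesis unfolding a_def b_def .
    qed
    have "u \<nu> - u \<mu> = (\<Sum>k<n. u (pt (Suc k)) - u (pt k))"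
      using sum_lessThan_telescope[of "\<lambda>k. u (pt k)" n] pt0 ptn by simp
    also have "\<dots> < (\<Sum>k<n. L' / (real n - L'))"
      by (rule sum_strict_mono) (use n0 tm in auto)
    also have "\<dots> = real n * L' / (real n - L')" by simp
    also have "\<dots> \<le> L" using n1 nL' by (simp add: pos_divide_le_eq algebra_simps)
    finally show False using mn(5) by simp
  qed
  then obtain m where m: "m \<in> {\<mu>..\<nu>}" "Pw m (D / L')" by blast
  have "D / L' \<le> w / L'" using Dw L' by (intro divide_right_mono) auto
  then have "Pw m (w / L')" using m(2) by (auto simp: Pw_def intro: order_trans)
  moreover have "th m \<le> th \<nu>" using th_le[of m \<nu>] m mn x by auto
  ultimately show ?thesis using m mn thn by (intro exI[of _ m]) auto
qed

lemma iterate: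
  assumes x0: "p < x0" "x0 \<le> \<delta>0" "\<delta>0 < t0" "t0 < q"
    and reg: "\<And>x. x \<in> {p<..\<delta>0} \<Longrightarrow> u x + L \<le> u t0"
    and P0: "Pw x0 w0" and w0: "0 < w0" and room: "th x0 + w0 * (L' / (L' - 1)) \<le> th \<delta>0"
    and L': "1 < L'" "L' < L"
  shows "\<exists>x. x0 \<le> x \<and> x \<le> \<delta>0 \<and> th x \<le> th x0 + w0 * (\<Sum>i<k. (1/L')^i) \<and> Pw x (w0 / L'^k)"
proof (induction k)
  case 0
  show ?case using P0 x0 by (intro exI[of _ x0]) auto
next
  case (Suc k)
  have sum_le: "(\<Sum>i<j. (1/L')^i) \<le> L' / (L' - 1)" for j
  proof -
    have ne: "1 / L' \<noteq> 1" using L' by simp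
    have "(\<Sum>i<j. (1/L')^i) = (1 - (1/L')^j) / (1 - 1/L')" by (simp only: sum_gp_strict if_not_P[OF ne])
    also have "\<dots> \<le> 1 / (1 - 1/L')" using L' by (intro divide_right_mono) auto
    also have "\<dots> = L' / (L' - 1)" using L' by (simp add: field_simps)
    finally show ?thesis .
  qed
  have le_d0: "x \<le> \<delta>0" if "x0 \<le> x" "x \<le> t0" "th x \<le> th x0 + w0 * (\<Sum>i<j. (1/L')^i)" for x j
  proof (rule ccontr)
    assume "\<not> x \<le> \<delta>0"
    then have "th \<delta>0 < th x" using th_less[of \<delta>0 x] x0 that by auto
    moreover have "w0 * (\<Sum>i<j. (1/L')^i) \<le> w0 * (L' / (L' - 1))" using sum_le w0 by (intro mult_left_mono) auto
    ultimately show False using that room by linarith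
  qed
  from Suc obtain x where x: "x0 \<le> x" "x \<le> \<delta>0" "th x \<le> th x0 + w0 * (\<Sum>i<k. (1/L')^i)" "Pw x (w0 / L'^k)"
    by blast
  have "u x + L \<le> u t0" using reg x x0 by auto
  from step[OF _ _ _ this x(4) L'] x x0 obtain m where
    m: "x \<le> m" "m \<le> t0" "th m \<le> th x + w0 / L'^k" "Pw m (w0 / L'^k / L')" by auto
  have "th m \<le> th x0 + w0 * (\<Sum>i<Suc k. (1/L')^i)"
    using m(3) x(3) by (simp add: algebra_simps power_one_over)
  moreover have eq: "w0 / L'^k / L' = w0 / L' ^ Suc k" by (simp add: field_simps)
  moreover have "Pw m (w0 / L' ^ Suc k)" using m(4) by (simp only: eq)
  ultimately show ?case using m x le_d0[of m "Suc k"] by (intro exI[of _ m]) auto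
qed

lemma contra: False
proof -
  define t0 where "t0 = (p+q)/2"
  have t0: "p < t0" "t0 < q" using pq by (auto simp: t0_def)
  have small: "\<exists>b>p. \<forall>x. p < x \<and> x < b \<and> x \<le> q \<longrightarrow> u x < M" for M
  proof -
    have "((\<lambda>x. norm (z x)) \<longlongrightarrow> 0) (at_right p)" using tendsto_norm_zero[OF zlim] .
    then have "\<forall>\<^sub>F x in at_right p. norm (z x) < exp M" by (rule order_tendstoD) simp
    then obtain b where b: "b > p" "\<forall>y>p. y < b \<longrightarrow> norm (z y) < exp M"
      by (auto simp: eventually_at_right_field)
    have "u x < M" if "p < x" "x < b" "x \<le> q" for x
    proof -
      have "norm (z x) = exp (u x)" using zg[of x] that by simp
      moreover have "norm (z x) < exp M" using b(2) that by auto
      ultimately show ?thesis by simp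
    qed
    then show ?thesis using b(1) by blast
  qed
  obtain b where b: "b > p" "\<forall>x. p < x \<and> x < b \<and> x \<le> q \<longrightarrow> u x < u t0 - L" using small by blast
  define \<delta>0 where "\<delta>0 = min ((p+b)/2) ((p+t0)/2)"
  have \<delta>0: "p < \<delta>0" "\<delta>0 < t0" "\<delta>0 < b" using b t0 by (auto simp: \<delta>0_def min_def)
  have reg: "u x + L \<le> u t0" if "x \<in> {p<..\<delta>0}" for x
  proof -
    have "u x < u t0 - L" using b(2) that \<delta>0 t0 by auto
    then show ?thesis by simp
  qed
  define L' where "L' = (1 + L) / 2"
  have L': "1 < L'" "L' < L" using L1 by (auto simp: L'_def)
  define C where "C = L' / (L' - 1)"
  have C0: "0 < C" using L' by (simp add: C_def)
  have \<delta>I: "\<delta>0 \<in> {p<..<q}" using \<delta>0 t0 by auto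
  obtain x0 w0 where x0w0: "p < x0" "x0 \<le> \<delta>0" "Pw x0 w0" "0 < w0" "th x0 + w0 * C \<le> th \<delta>0"
  proof (cases "bdd_below (th ` {p<..\<delta>0})")
    case False
    then have "\<not> (\<forall>x\<in>{p<..\<delta>0}. th \<delta>0 - pi * C \<le> th x)" unfolding bdd_below_def by auto
    then obtain x0 where x0: "x0 \<in> {p<..\<delta>0}" "th x0 < th \<delta>0 - pi * C" by (auto simp: not_le)
    have "Pw x0 pi" using Win_pi by (auto simp: Pw_def intro: less_imp_le)
    then show ?thesis using x0 by (intro that[of x0 pi]) (auto simp: algebra_simps)
  next
    case True
    define \<beta> where "\<beta> = Inf (th ` {p<..\<delta>0})"
    have \<beta>le: "\<beta> \<le> th x" if "x \<in> {p<..\<delta>0}" for x unfolding \<beta>_def using True that by (auto intro: cInf_lower)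
    define y' where "y' = (p + \<delta>0)/2"
    have y': "y' \<in> {p<..\<delta>0}" "y' \<in> {p<..<q}" using \<delta>0 t0 by (auto simp: y'_def)
    have "th y' < th \<delta>0" using th_less[OF y'(2) \<delta>I] \<delta>0 by (auto simp: y'_def)
    then have \<beta>d: "\<beta> < th \<delta>0" using \<beta>le[OF y'(1)] by simp
    define \<epsilon> where "\<epsilon> = (th \<delta>0 - \<beta>) / (1 + C)"
    have \<epsilon>0: "0 < \<epsilon>" using \<beta>d C0 by (simp add: \<epsilon>_def)
    have C1: "1 + C \<noteq> 0" using C0 by simp
    have e1: "\<epsilon> * (1 + C) = th \<delta>0 - \<beta>" using C1 unfolding \<epsilon>_def by simp
    have "\<epsilon> + \<epsilon> * C = th \<delta>0 - \<beta>" using e1 by (simp add: distrib_left)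
    then have \<epsilon>eq: "\<beta> + \<epsilon> + \<epsilon> * C = th \<delta>0" by linarith
    have "th ` {p<..\<delta>0} \<noteq> {}" using \<delta>0 by auto
    then obtain y where y: "y \<in> {p<..\<delta>0}" "th y < \<beta> + \<epsilon>"
      using cInf_lessD[of "th ` {p<..\<delta>0}" "\<beta> + \<epsilon>"] \<epsilon>0 unfolding \<beta>_def by auto
    have cuy: "continuous_on {y..q} u" by (rule continuous_on_subset[OF cont_u]) (use y in auto)
    obtain ym where ym: "ym \<in> {y..q}" "\<forall>x\<in>{y..q}. u ym \<le> u x"
      using continuous_attains_inf[OF compact_Icc _ cuy] y \<delta>0 t0 by auto
    obtain b1 where b1: "b1 > p" "\<forall>x. p < x \<and> x < b1 \<and> x \<le> q \<longrightarrow> u x < u ym - L" using small by blast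
    define x0 where "x0 = min ((p+b1)/2) ((p+y)/2)"
    have x0: "p < x0" "x0 < y" "x0 < b1" using b1 y by (auto simp: x0_def min_def)
    have ux0: "u x0 < u ym - L" using b1 x0 y \<delta>0 t0 by auto
    have "Pw x0 \<epsilon>"
      unfolding Pw_def
    proof (intro allI impI)
      fix t assume W: "Win x0 t"
      then have tq: "t < q" "x0 \<le> t" "u t - L \<le> u x0" by (auto simp: Win_def)
      have "\<not> y \<le> t"
      proof
        assume "y \<le> t"
        then have "u ym \<le> u t" using ym tq by auto
        then show False using tq ux0 by simp
      qed
      then have "th t \<le> th y" using th_le[of t y] tq x0 y \<delta>0 t0 by auto
      moreover have "\<beta> \<le> th x0" using \<beta>le x0 y by auto
      ultimately show "th t - th x0 \<le> \<epsilon>" using y by simp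
    qed
    moreover have "th x0 < th y" using th_less[of x0 y] x0 y \<delta>0 t0 by auto
    moreover have "th x0 + \<epsilon> * C \<le> th \<delta>0" using calculation(2) y \<epsilon>eq by linarith
    ultimately show ?thesis using x0 y \<epsilon>0 by (intro that[of x0 \<epsilon>]) auto
  qed
  have room: "th x0 + w0 * (L' / (L' - 1)) \<le> th \<delta>0" using x0w0(5) unfolding C_def .
  have it: "\<exists>x. x0 \<le> x \<and> x \<le> \<delta>0 \<and> th x \<le> th x0 + w0 * (\<Sum>i<k. (1/L')^i) \<and> Pw x (w0 / L'^k)" for k
    by (rule iterate[OF x0w0(1,2) \<delta>0(2) t0(2) reg x0w0(3,4) room L'])
  define K where "K = {y \<in> {x0..t0} \<times> {x0..t0}. u (fst y) + L \<le> u (snd y) \<and> fst y \<le> snd y}"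
  have cK: "compact K" unfolding K_def using Kcompact x0w0 t0 by auto
  have "u x0 + L \<le> u t0" using reg x0w0 by auto
  then obtain \<mu>0 \<nu>0 where mn0: "x0 \<le> \<mu>0" "\<mu>0 < \<nu>0" "\<nu>0 \<le> t0" "u \<nu>0 - u \<mu>0 = L"
    using crossing[of x0 t0] x0w0 \<delta>0 t0 by force
  then have "(\<mu>0, \<nu>0) \<in> K" by (auto simp: K_def)
  then have Kne: "K \<noteq> {}" by auto
  have ch: "continuous_on K (\<lambda>y. th (snd y) - th (fst y))"
    by (rule continuous_on_subset[of "{x0..t0} \<times> {x0..t0}"])
      (use cont_pair[of x0 t0] x0w0 t0 in \<open>auto simp: K_def intro!: continuous_intros\<close>)
  obtain ys where ys: "ys \<in> K" "\<forall>y\<in>K. th (snd ys) - th (fst ys) \<le> th (snd y) - th (fst y)"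
    using continuous_attains_inf[OF cK Kne ch] by blast
  define \<delta> where "\<delta> = th (snd ys) - th (fst ys)"
  have \<delta>pos: "0 < \<delta>"
  proof -
    have h: "fst ys \<le> snd ys" "u (fst ys) + L \<le> u (snd ys)" "fst ys \<in> {x0..t0}" "snd ys \<in> {x0..t0}"
      using ys by (auto simp: K_def)
    then have "fst ys < snd ys" using L1 by (cases "fst ys = snd ys") auto
    then show ?thesis using th_less[of "fst ys" "snd ys"] h x0w0 t0 by (auto simp: \<delta>_def)
  qed
  obtain k where k: "w0 / \<delta> < L' ^ k" using real_arch_pow[OF L'(1)] by blast
  have Lk: "0 < L' ^ k" using L' by simp
  have wk: "w0 / L'^k < \<delta>" using k \<delta>pos Lk by (simp add: divide_less_eq mult.commute)
  obtain x where x: "x0 \<le> x" "x \<le> \<delta>0" "Pw x (w0 / L'^k)" using it[of k] by blast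
  have "u x + L \<le> u t0" using reg x x0w0 by auto
  then obtain \<mu> \<nu> where mn: "x \<le> \<mu>" "\<mu> < \<nu>" "\<nu> \<le> t0" "Win x \<nu>" "u \<nu> - u \<mu> = L"
    using crossing[of x t0] x x0w0 \<delta>0 t0 by force
  have "(\<mu>, \<nu>) \<in> K" using mn x by (auto simp: K_def)
  then have "\<delta> \<le> th \<nu> - th \<mu>" using ys by (force simp: \<delta>_def)
  moreover have "th \<nu> - th x \<le> w0 / L'^k" using x(3) mn(4) by (auto simp: Pw_def)
  moreover have "th x \<le> th \<mu>" using th_le[of x \<mu>] mn x x0w0 t0 \<delta>0 by auto
  ultimately show False using wk by simp
qed

end

lemma F_eq_gen:
  assumes "a = exp A" "b = exp B"
  shows "Im (cnj a * b) = exp (Re A + Re B) * sin (Im B - Im A)"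
proof -
  have "cnj a * b = exp (cnj A + B)" using assms by (simp add: exp_cnj exp_add)
  then show ?thesis by (simp add: Im_exp algebra_simps)
qed

lemma core_inc:
  assumes pq: "p < q" and zcont: "continuous_on {p<..q} z" and zlim: "(z \<longlongrightarrow> 0) (at_right p)"
    and gcont: "continuous_on {p<..q} g" and zg: "\<And>x. x \<in> {p<..q} \<Longrightarrow> z x = exp (g x)"
    and thmono: "strict_mono_on {p<..<q} (\<lambda>x. Im (g x))" and L1: "1 < L"
  shows "\<exists>t\<in>{p<..<q}. \<exists>\<tau>\<in>{p<..t}. Re (g t) - L \<le> Re (g \<tau>) \<and> locext (\<lambda>x. Im (cnj (z t) * z x)) \<tau>"
proof (rule ccontr)
  assume nt: "\<not> ?thesis"
  interpret core p q L z g
    by unfold_locales (use assms nt in auto)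
  show False by (rule contra)
qed

lemma core_full:
  fixes z :: "real \<Rightarrow> complex"
  assumes pq: "p < q" and zcont: "continuous_on {p<..q} z" and zlim: "(z \<longlongrightarrow> 0) (at_right p)"
    and nz: "\<And>x. x \<in> {p<..q} \<Longrightarrow> z x \<noteq> 0" and L1: "1 < L"
  shows "\<exists>t\<in>{p<..<q}. \<exists>\<tau>\<in>{p<..t}. exp (-L) * cmod (z t) \<le> cmod (z \<tau>) \<and> locext (\<lambda>x. Im (cnj (z t) * z x)) \<tau>"
proof -
  have "contractible {p<..q}" by (rule convex_imp_contractible) simp
  then obtain g where gcont: "continuous_on {p<..q} g" and zg: "\<And>x. x \<in> {p<..q} \<Longrightarrow> z x = exp (g x)"
    using continuous_logarithm_on_contractible[OF zcont _ nz] by metis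
  have cmodz: "cmod (z x) = exp (Re (g x))" if "x \<in> {p<..q}" for x using zg[OF that] by simp
  have conv: "exp (-L) * cmod (z t) \<le> cmod (z \<tau>)"
    if "t \<in> {p<..q}" "\<tau> \<in> {p<..q}" "Re (g t) - L \<le> Re (g \<tau>)" for t \<tau>
  proof -
    have "exp (-L) * cmod (z t) = exp (Re (g t) - L)" using cmodz[OF that(1)] by (simp add: exp_diff exp_minus field_simps)
    also have "\<dots> \<le> exp (Re (g \<tau>))" using that(3) by simp
    finally show ?thesis using cmodz[OF that(2)] by simp
  qed
  define th where "th x = Im (g x)" for x
  have cth: "continuous_on {p<..<q} th" unfolding th_def
    by (rule continuous_on_subset[of "{p<..q}"]) (use gcont in \<open>auto intro!: continuous_intros\<close>)
  show ?thesis
  proof (cases "\<exists>t\<in>{p<..<q}. locext th t")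
    case True
    then obtain t where t: "t \<in> {p<..<q}" "locext th t" by blast
    have "isCont th t" using cth t by (simp add: continuous_on_eq_continuous_at)
    then have "(th \<longlongrightarrow> th t) (at t)" by (simp add: isCont_def)
    then have e1: "\<forall>\<^sub>F x in at t. dist (th x) (th t) < pi" by (rule tendstoD) simp
    have e2: "\<forall>\<^sub>F x in at t. x \<in> {p<..<q}" using eventually_at_open_in[of "{p<..<q}" t] t by auto
    have Fx: "Im (cnj (z t) * z x) = exp (Re (g t) + Re (g x)) * sin (th x - th t)" if "x \<in> {p<..<q}" for x
      using F_eq_gen[OF zg zg] that t by (auto simp: th_def)
    have Ft: "Im (cnj (z t) * z t) = 0" using Fx[OF t(1)] by simp
    from t(2)[unfolded locext_def] have "locext (\<lambda>x. Im (cnj (z t) * z x)) t"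
    proof
      assume "\<forall>\<^sub>F x in at t. th x \<le> th t"
      with e1 e2 have "\<forall>\<^sub>F x in at t. Im (cnj (z t) * z x) \<le> Im (cnj (z t) * z t)"
      proof eventually_elim
        case (elim x)
        then have "0 \<le> sin (th t - th x)" by (intro sin_ge_zero) (auto simp: dist_real_def)
        moreover have "sin (th x - th t) = - sin (th t - th x)" by (metis minus_diff_eq sin_minus)
        ultimately show ?case using Fx[OF elim(2)] Ft by (simp add: mult_nonneg_nonneg)
      qed
      then show ?thesis unfolding locext_def by blast
    next
      assume "\<forall>\<^sub>F x in at t. th t \<le> th x"
      with e1 e2 have "\<forall>\<^sub>F x in at t. Im (cnj (z t) * z t) \<le> Im (cnj (z t) * z x)"
      proof eventually_elim
        case (elim x)
        then have "0 \<le> sin (th x - th t)" by (intro sin_ge_zero) (auto simp: dist_real_def)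
        then show ?case using Fx[OF elim(2)] Ft by simp
      qed
      then show ?thesis unfolding locext_def by blast
    qed
    moreover have "exp (-L) * cmod (z t) \<le> cmod (z t)"
    proof -
      have "exp (-L) \<le> 1" using L1 by simp
      then show ?thesis by (simp add: mult_left_le_one_le)
    qed
    moreover have "t \<in> {p<..t}" using t by auto
    ultimately show ?thesis using t(1) by blast
  next
    case False
    have inj: "inj_on th {p<..<q}"
    proof (rule inj_onI, rule ccontr)
      fix x y assume xy: "x \<in> {p<..<q}" "y \<in> {p<..<q}" "th x = th y" "x \<noteq> y"
      have key: False if k1: "x' < y'" and k2: "x' \<in> {p<..<q}" "y' \<in> {p<..<q}" and k4: "th x' = th y'" for x' y'
      proof -
        have "continuous_on {x'..y'} th" by (rule continuous_on_subset[OF cth]) (use k2 in auto)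
        then obtain \<tau> where "\<tau> \<in> {x'<..<y'}" "locext th \<tau>" using locext_exists[OF k1 _ k4] by blast
        then show False using False k2 by auto
      qed
      from xy(4) have "x < y \<or> y < x" by auto
      then show False using key[of x y] key[of y x] xy by auto
    qed
    then have "strict_mono_on {p<..<q} th \<or> strict_antimono_on {p<..<q} th"
      using injective_eq_monotone_map[of "{p<..<q}" th] cth by (simp add: is_interval_convex_1)
    then show ?thesis
    proof
      assume mono: "strict_mono_on {p<..<q} th"
      then obtain t \<tau> where t: "t \<in> {p<..<q}" "\<tau> \<in> {p<..t}" "Re (g t) - L \<le> Re (g \<tau>)"
          "locext (\<lambda>x. Im (cnj (z t) * z x)) \<tau>"
        using core_inc[OF pq zcont zlim gcont zg _ L1] unfolding th_def by blast
      moreover have "exp (-L) * cmod (z t) \<le> cmod (z \<tau>)" using conv[of t \<tau>] t by auto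
      ultimately show ?thesis by blast
    next
      assume anti: "strict_antimono_on {p<..<q} th"
      have mono': "strict_mono_on {p<..<q} (\<lambda>x. Im (cnj (g x)))"
      proof (rule strict_mono_onI)
        fix r s assume rs: "r \<in> {p<..<q}" "s \<in> {p<..<q}" "r < s"
        have "th s < th r" using monotone_onD[OF anti rs(1) rs(2) rs(3)] by simp
        then show "Im (cnj (g r)) < Im (cnj (g s))" by (simp add: th_def)
      qed
      have "\<exists>t\<in>{p<..<q}. \<exists>\<tau>\<in>{p<..t}. Re (cnj (g t)) - L \<le> Re (cnj (g \<tau>))
              \<and> locext (\<lambda>x. Im (cnj (cnj (z t)) * cnj (z x))) \<tau>"
      proof (rule core_inc[OF pq _ _ _ _ mono' L1])
        show "continuous_on {p<..q} (\<lambda>x. cnj (z x))" using zcont by (intro continuous_intros)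
        show "((\<lambda>x. cnj (z x)) \<longlongrightarrow> 0) (at_right p)" using tendsto_cnj[OF zlim] by simp
        show "continuous_on {p<..q} (\<lambda>x. cnj (g x))" using gcont by (intro continuous_intros)
        show "\<And>x. x \<in> {p<..q} \<Longrightarrow> cnj (z x) = exp (cnj (g x))" using zg by (simp add: exp_cnj)
      qed
      then obtain t \<tau> where t: "t \<in> {p<..<q}" "\<tau> \<in> {p<..t}" "Re (g t) - L \<le> Re (g \<tau>)"
          "locext (\<lambda>x. Im (cnj (cnj (z t)) * cnj (z x))) \<tau>"
        by auto
      have "(\<lambda>x. Im (cnj (cnj (z t)) * cnj (z x))) = (\<lambda>x. - Im (cnj (z t) * z x))"
        by (rule ext) (simp add: algebra_simps)
      then have "locext (\<lambda>x. Im (cnj (z t) * z x)) \<tau>" using t(4) locext_uminus by metis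
      moreover have "exp (-L) * cmod (z t) \<le> cmod (z \<tau>)" using conv[of t \<tau>] t by auto
      ultimately show ?thesis using t(1,2) by blast
    qed
  qed
qed


lemma locext_transfer:
  assumes le: "locext (\<lambda>x. f (k x)) x0" and fl: "filterlim h (at x0) (at y0)"
    and kh: "\<And>y. k (h y) = y" and h0: "h y0 = x0"
  shows "locext f y0"
proof -
  have e: "f (k x0) = f y0" using kh[of y0] h0 by simp
  from le[unfolded locext_def] show ?thesis
  proof
    assume "\<forall>\<^sub>F x in at x0. f (k x) \<le> f (k x0)"
    from eventually_compose_filterlim[OF this fl] have "\<forall>\<^sub>F y in at y0. f y \<le> f y0"
      using e kh by simp
    then show ?thesis unfolding locext_def by blast
  next
    assume "\<forall>\<^sub>F x in at x0. f (k x0) \<le> f (k x)"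
    from eventually_compose_filterlim[OF this fl] have "\<forall>\<^sub>F y in at y0. f y0 \<le> f y"
      using e kh by simp
    then show ?thesis unfolding locext_def by blast
  qed
qed

lemma core_bot:
  fixes z :: "real \<Rightarrow> complex"
  assumes zcont: "continuous_on {..q} z" and zlim: "(z \<longlongrightarrow> 0) at_bot"
    and nz: "\<And>x. x \<le> q \<Longrightarrow> z x \<noteq> 0" and L1: "1 < L"
  shows "\<exists>t \<tau>. \<tau> \<le> t \<and> t < q \<and> exp (-L) * cmod (z t) \<le> cmod (z \<tau>) \<and> locext (\<lambda>x. Im (cnj (z t) * z x)) \<tau>"
proof -
  define q1 where "q1 = min q (-1)"
  have q1: "q1 < 0" "q1 \<le> q" by (auto simp: q1_def)
  define q' where "q' = -1/q1"
  have q'0: "0 < q'" using q1 by (simp add: q'_def)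
  have q1q': "q1 = -1/q'" using q1 by (simp add: q'_def)
  have mono: "-1/x < -1/y" if "0 < x" "x < y" for x y :: real using that by (simp add: field_simps)
  have monole: "-1/x \<le> -1/y" if "0 < x" "x \<le> y" for x y :: real
  proof -
    have "1/y \<le> 1/x" using that by (intro divide_left_mono) auto
    then show ?thesis by simp
  qed
  define w where "w x = z (-1/x)" for x
  have map: "-1/x \<le> q" if "x \<in> {0<..q'}" for x
    using monole[of x q'] that q1q' q1 by auto
  have wcont: "continuous_on {0<..q'} w" unfolding w_def
    by (rule continuous_on_compose2[OF zcont]) (use map in \<open>auto intro!: continuous_intros\<close>)
  have "filterlim (\<lambda>x. - inverse x) at_bot (at_right (0::real))"
    using filterlim_inverse_at_top_right by (simp add: filterlim_uminus_at_bot)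
  from filterlim_compose[OF zlim this] have "((\<lambda>x. z (- inverse x)) \<longlongrightarrow> 0) (at_right 0)" .
  moreover have "(\<lambda>x. z (- inverse x)) = w" by (rule ext) (simp add: w_def inverse_eq_divide)
  ultimately have wlim: "(w \<longlongrightarrow> 0) (at_right 0)" by simp
  have wnz: "w x \<noteq> 0" if "x \<in> {0<..q'}" for x using nz map that by (simp add: w_def)
  obtain t' \<tau>' where t': "t' \<in> {0<..<q'}" "\<tau>' \<in> {0<..t'}" "exp (-L) * cmod (w t') \<le> cmod (w \<tau>')"
    "locext (\<lambda>x. Im (cnj (w t') * w x)) \<tau>'"
    using core_full[OF q'0 wcont wlim wnz L1] by blast
  define t where "t = -1/t'"
  define \<tau> where "\<tau> = -1/\<tau>'"
  have tq: "t < q" using mono[of t' q'] t' q1q' q1 by (auto simp: t_def)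
  have \<tau>t: "\<tau> \<le> t" using monole[of \<tau>' t'] t' by (auto simp: t_def \<tau>_def)
  have \<tau>0: "\<tau> \<noteq> 0" "\<tau> < 0" using t' by (auto simp: \<tau>_def)
  have inv: "\<And>y::real. -1 / (-1 / y) = y" by simp
  have fl: "filterlim (\<lambda>y. -1/y) (at \<tau>') (at \<tau>)"
  proof (rule filterlim_atI)
    have "((\<lambda>y. -1/y) \<longlongrightarrow> -1/\<tau>) (at \<tau>)" using \<tau>0 by (intro tendsto_intros) auto
    then show "((\<lambda>y. -1/y) \<longlongrightarrow> \<tau>') (at \<tau>)" by (simp add: \<tau>_def)
    have "\<forall>\<^sub>F y in at \<tau>. y \<noteq> \<tau>" by (simp add: eventually_at_filter)
    then show "\<forall>\<^sub>F y in at \<tau>. -1/y \<noteq> \<tau>'"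
    proof (rule eventually_mono)
      fix y assume ny: "y \<noteq> \<tau>"
      show "-1/y \<noteq> \<tau>'"
      proof
        assume eq: "-1/y = \<tau>'"
        have "y = -1/(-1/y)" by (rule inv[symmetric])
        also have "\<dots> = \<tau>" using eq by (simp only: \<tau>_def)
        finally show False using ny by simp
      qed
    qed
  qed
  have lx: "locext (\<lambda>x. (\<lambda>y. Im (cnj (z t) * z y)) (-1/x)) \<tau>'"
    using t'(4) by (simp add: w_def t_def)
  have "locext (\<lambda>y. Im (cnj (z t) * z y)) \<tau>"
  proof (rule locext_transfer[where f="\<lambda>y. Im (cnj (z t) * z y)" and k="\<lambda>x. -1/x", OF lx fl])
    show "\<And>y::real. -1 / (-1 / y) = y" by (rule inv)
    show "-1 / \<tau> = \<tau>'" unfolding \<tau>_def by (rule inv)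
  qed
  moreover have "exp (-L) * cmod (z t) \<le> cmod (z \<tau>)" using t'(3) by (simp add: w_def t_def \<tau>_def)
  ultimately show ?thesis using tq \<tau>t by blast
qed

definition Cx :: "real^2 \<Rightarrow> complex" where "Cx v = Complex (v$1) (v$2)"

lemma Cx_eq: "Cx v = complex_of_real (v$1) + \<i> * complex_of_real (v$2)"
  by (simp add: Cx_def Complex_eq)

lemma Cx_norm: "cmod (Cx v) = norm v"
  by (simp add: Cx_def norm_vec_def L2_set_def sum_2 complex_norm)

lemma Cx_det: "Im (cnj (Cx v) * Cx w) = det2 v w"
  by (simp add: Cx_def det2_def)

lemma Cx_tendsto: "(f \<longlongrightarrow> l) F \<Longrightarrow> ((\<lambda>x. Cx (f x)) \<longlongrightarrow> Cx l) F"
  unfolding Cx_eq by (intro tendsto_intros)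

lemma Cx_cont: "continuous_on S f \<Longrightarrow> continuous_on S (\<lambda>x. Cx (f x))"
  unfolding Cx_eq by (intro continuous_intros)

lemma Cx_0: "Cx 0 = 0" by (simp add: Cx_def complex_eq_iff)

lemma ev_ereal:
  assumes "\<forall>\<^sub>F x in at \<tau>. Q (ereal x)"
  shows "\<forall>\<^sub>F y in at (ereal \<tau>) within I. Q y"
proof -
  from assms obtain S where S: "open S" "\<tau> \<in> S" "\<forall>x\<in>S. x \<noteq> \<tau> \<longrightarrow> Q (ereal x)"
    unfolding eventually_at_topological by auto
  have "open (ereal ` S)" using S(1) by (rule open_ereal)
  then show ?thesis unfolding eventually_at_topological using S by (intro exI[of _ "ereal ` S"]) auto
qed

lemma finish:
  fixes \<gamma> :: "ereal \<Rightarrow> real^2"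
  assumes ab: "a < b" and cont: "continuous_on {a..<b} \<gamma>"
    and T: "a < ereal t" "ereal t < b" and \<tau>: "a < ereal \<tau>" "\<tau> \<le> t"
    and ne: "\<gamma> (ereal t) \<noteq> \<gamma> a"
    and cd: "c * dist (\<gamma> a) (\<gamma> (ereal t)) \<le> dist (\<gamma> a) (\<gamma> (ereal \<tau>))"
    and le: "locext (\<lambda>x. Im (cnj (Cx (\<gamma> (ereal t) - \<gamma> a)) * Cx (\<gamma> (ereal x) - \<gamma> a))) \<tau>"
  shows "ereal c \<le> ratio_DS_D \<gamma> a b (ereal t)"
proof -
  define V where "V = \<gamma> (ereal t) - \<gamma> a"
  have fx: "Im (cnj (Cx V) * Cx (\<gamma> (ereal x) - \<gamma> a)) = det2 V (\<gamma> (ereal x)) - det2 V (\<gamma> a)" for x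
    unfolding Cx_det by (simp add: det2_def algebra_simps)
  have "(\<forall>\<^sub>F x in at \<tau>. det2 V (\<gamma> (ereal x)) \<le> det2 V (\<gamma> (ereal \<tau>))) \<or>
        (\<forall>\<^sub>F x in at \<tau>. det2 V (\<gamma> (ereal \<tau>)) \<le> det2 V (\<gamma> (ereal x)))"
    using le unfolding locext_def V_def[symmetric] fx by simp
  then have "(\<forall>\<^sub>F y in at (ereal \<tau>) within {a..<b}. det2 V (\<gamma> y) \<le> det2 V (\<gamma> (ereal \<tau>))) \<or>
        (\<forall>\<^sub>F y in at (ereal \<tau>) within {a..<b}. det2 V (\<gamma> (ereal \<tau>)) \<le> det2 V (\<gamma> y))"
    using ev_ereal[where \<tau>=\<tau> and Q="\<lambda>y. det2 V (\<gamma> y) \<le> det2 V (\<gamma> (ereal \<tau>))"]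
      ev_ereal[where \<tau>=\<tau> and Q="\<lambda>y. det2 V (\<gamma> (ereal \<tau>)) \<le> det2 V (\<gamma> y)"] by blast
  then have sp: "support_point \<gamma> {a..<b} a (ereal t) (ereal \<tau>)"
    unfolding support_point_def V_def using \<tau> by auto
  have mem: "ereal \<tau> \<in> supp_set \<gamma> a b (ereal t)" unfolding supp_set_def using sp \<tau> by auto
  have "compact {a..ereal t}" by (simp add: compact_eq_closed)
  moreover have "continuous_on {a..ereal t} \<gamma>" by (rule continuous_on_subset[OF cont]) (use T in auto)
  ultimately have "compact (\<gamma> ` {a..ereal t})" by (rule compact_continuous_image[rotated])
  then have "bounded (\<gamma> ` {a..ereal t})" by (rule compact_imp_bounded)
  then obtain B where B: "\<forall>v\<in>\<gamma> ` {a..ereal t}. norm v \<le> B" unfolding bounded_iff by blast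
  have bdd: "bdd_above ((\<lambda>\<tau>. dist (\<gamma> a) (\<gamma> \<tau>)) ` supp_set \<gamma> a b (ereal t))"
  proof (rule bdd_aboveI)
    fix d assume "d \<in> (\<lambda>\<tau>. dist (\<gamma> a) (\<gamma> \<tau>)) ` supp_set \<gamma> a b (ereal t)"
    then obtain s where s: "s \<in> supp_set \<gamma> a b (ereal t)" "d = dist (\<gamma> a) (\<gamma> s)" by auto
    then have "s \<in> {a..ereal t}" by (auto simp: supp_set_def)
    then have "norm (\<gamma> s) \<le> B" "norm (\<gamma> a) \<le> B" using B T by auto
    then show "d \<le> B + B" using s(2) norm_triangle_ineq4[of "\<gamma> a" "\<gamma> s"] by (simp add: dist_norm)
  qed
  have DS: "dist (\<gamma> a) (\<gamma> (ereal \<tau>)) \<le> DS \<gamma> a b (ereal t)"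
    unfolding DS_def by (rule cSup_upper) (use mem bdd in auto)
  have d0: "0 < dist (\<gamma> a) (\<gamma> (ereal t))" using ne by simp
  have "c \<le> DS \<gamma> a b (ereal t) / dist (\<gamma> a) (\<gamma> (ereal t))"
    using cd DS d0 by (simp add: pos_le_divide_eq)
  then show ?thesis using d0 by (simp add: ratio_DS_D_def)
qed

lemma key:
  fixes \<gamma> :: "ereal \<Rightarrow> real^2"
  assumes ab: "a < b" and cont: "continuous_on {a..<b} \<gamma>" and y2: "a < y2" "y2 \<le> b"
    and c: "0 < c" "c < exp (-1)"
  shows "\<exists>T\<in>{a<..<y2}. ereal c \<le> ratio_DS_D \<gamma> a b T"
proof (cases "\<exists>T\<in>{a<..<y2}. \<gamma> T = \<gamma> a")
  case True
  then obtain T where "T \<in> {a<..<y2}" "\<gamma> T = \<gamma> a" by blast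
  then show ?thesis by (intro bexI[of _ T]) (auto simp: ratio_DS_D_def)
next
  case False
  define L where "L = - ln c"
  have "ln c < ln (exp (-1))" using c by (subst ln_less_cancel_iff) auto
  then have L1: "1 < L" by (simp add: L_def)
  have cL: "exp (-L) = c" using c by (simp add: L_def)
  define z where "z x = Cx (\<gamma> (ereal x) - \<gamma> a)" for x
  have zfun: "z = (\<lambda>x. Cx (\<gamma> (ereal x) - \<gamma> a))" by (rule ext) (simp add: z_def)
  obtain y3 where y3: "a < ereal y3" "ereal y3 < y2" using ereal_dense2[OF y2(1)] by blast
  have sub: "ereal x \<in> {a..<b}" if "a < ereal x" "x \<le> y3" for x
  proof -
    have "ereal x \<le> ereal y3" using that by simp
    then have "ereal x < y2" using y3(2) by (rule le_less_trans)
    then show ?thesis using that y2 by auto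
  qed
  have zcont: "continuous_on {x. a < ereal x \<and> x \<le> y3} z" unfolding z_def
  proof (intro Cx_cont continuous_intros)
    show "continuous_on {x. a < ereal x \<and> x \<le> y3} (\<lambda>x. \<gamma> (ereal x))"
      by (rule continuous_on_compose2[OF cont continuous_on_ereal[OF continuous_on_id]])
        (use sub in auto)
  qed
  have nz: "z x \<noteq> 0" if "a < ereal x" "x \<le> y3" for x
  proof
    assume "z x = 0"
    then have "norm (\<gamma> (ereal x) - \<gamma> a) = 0" using Cx_norm[of "\<gamma> (ereal x) - \<gamma> a"] by (simp add: z_def)
    moreover have "ereal x \<le> ereal y3" using that by simp
    then have "ereal x < y2" using y3(2) by (rule le_less_trans)
    then have "ereal x \<in> {a<..<y2}" using that by auto
    ultimately show False using False by auto
  qed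
  have glim: "(\<gamma> \<longlongrightarrow> \<gamma> a) (at a within {a..<b})" using cont ab by (auto simp: continuous_on_def)
  have ex: "\<exists>t \<tau>. a < ereal \<tau> \<and> \<tau> \<le> t \<and> t < y3 \<and> exp (-L) * cmod (z t) \<le> cmod (z \<tau>)
               \<and> locext (\<lambda>x. Im (cnj (z t) * z x)) \<tau>"
  proof (cases a)
    case (real a0)
    have set: "{x. a < ereal x \<and> x \<le> y3} = {a0<..y3}" using real by auto
    have a0y3: "a0 < y3" using y3 real by auto
    have f: "filterlim (\<lambda>x. ereal x) (at a within {a..<b}) (at_right a0)"
      unfolding filterlim_at
    proof
      have "\<forall>\<^sub>F x in at_right a0. x \<in> {a0<..<y3}"
        using a0y3 by (auto simp: eventually_at_right_field intro!: exI[of _ y3])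
      then show "\<forall>\<^sub>F x in at_right a0. ereal x \<in> {a..<b} \<and> ereal x \<noteq> a"
      proof (rule eventually_mono)
        fix x assume "x \<in> {a0<..<y3}"
        then show "ereal x \<in> {a..<b} \<and> ereal x \<noteq> a" using real sub[of x] by auto
      qed
      show "((\<lambda>x. ereal x) \<longlongrightarrow> a) (at_right a0)" using real by (auto intro!: tendsto_intros)
    qed
    have "((\<lambda>x. \<gamma> (ereal x)) \<longlongrightarrow> \<gamma> a) (at_right a0)" by (rule filterlim_compose[OF glim f])
    then have "((\<lambda>x. Cx (\<gamma> (ereal x) - \<gamma> a)) \<longlongrightarrow> Cx (\<gamma> a - \<gamma> a)) (at_right a0)"
      by (intro Cx_tendsto tendsto_intros)
    then have zlim: "(z \<longlongrightarrow> 0) (at_right a0)" by (simp add: zfun Cx_0)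
    have "\<exists>t\<in>{a0<..<y3}. \<exists>\<tau>\<in>{a0<..t}. exp (-L) * cmod (z t) \<le> cmod (z \<tau>) \<and> locext (\<lambda>x. Im (cnj (z t) * z x)) \<tau>"
      by (rule core_full[OF a0y3 _ zlim _ L1]) (use zcont set nz real in auto)
    then obtain t \<tau> where tt: "t \<in> {a0<..<y3}" "\<tau> \<in> {a0<..t}" "exp (-L) * cmod (z t) \<le> cmod (z \<tau>)"
      "locext (\<lambda>x. Im (cnj (z t) * z x)) \<tau>" by blast
    have "a < ereal \<tau>" "\<tau> \<le> t" "t < y3" using tt real by auto
    then show ?thesis using tt(3,4) by blast
  next
    case PInf
    then show ?thesis using ab by simp
  next
    case MInf
    have set: "{x. a < ereal x \<and> x \<le> y3} = {..y3}" using MInf by auto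
    have f: "filterlim (\<lambda>x. ereal x) (at a within {a..<b}) at_bot"
      unfolding filterlim_at
    proof
      have "\<forall>\<^sub>F x in at_bot. x \<le> y3" by (rule eventually_le_at_bot)
      then show "\<forall>\<^sub>F x in at_bot. ereal x \<in> {a..<b} \<and> ereal x \<noteq> a"
      proof (rule eventually_mono)
        fix x assume "x \<le> y3"
        then show "ereal x \<in> {a..<b} \<and> ereal x \<noteq> a" using MInf sub[of x] by auto
      qed
      show "((\<lambda>x. ereal x) \<longlongrightarrow> a) at_bot" unfolding MInf tendsto_MInfty
      proof
        fix r :: real
        have "\<forall>\<^sub>F x in at_bot. x \<le> r - 1" by (auto simp: eventually_at_bot_linorder intro!: exI[of _ "r - 1"])
        then show "\<forall>\<^sub>F x in at_bot. ereal x < ereal r" by (rule eventually_mono) auto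
      qed
    qed
    have "((\<lambda>x. \<gamma> (ereal x)) \<longlongrightarrow> \<gamma> a) at_bot" by (rule filterlim_compose[OF glim f])
    then have "((\<lambda>x. Cx (\<gamma> (ereal x) - \<gamma> a)) \<longlongrightarrow> Cx (\<gamma> a - \<gamma> a)) at_bot"
      by (intro Cx_tendsto tendsto_intros)
    then have zlim: "(z \<longlongrightarrow> 0) at_bot" by (simp add: zfun Cx_0)
    have "\<exists>t \<tau>. \<tau> \<le> t \<and> t < y3 \<and> exp (-L) * cmod (z t) \<le> cmod (z \<tau>) \<and> locext (\<lambda>x. Im (cnj (z t) * z x)) \<tau>"
      by (rule core_bot[OF _ zlim _ L1]) (use zcont set nz MInf in auto)
    then show ?thesis using MInf by auto
  qed
  then obtain t \<tau> where t: "a < ereal \<tau>" "\<tau> \<le> t" "t < y3" "exp (-L) * cmod (z t) \<le> cmod (z \<tau>)"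
    "locext (\<lambda>x. Im (cnj (z t) * z x)) \<tau>" by blast
  have "ereal \<tau> \<le> ereal t" using t(2) by simp
  with t(1) have at: "a < ereal t" by (rule less_le_trans)
  have "ereal t < ereal y3" using t(3) by simp
  then have "ereal t < y2" using y3(2) by (rule less_trans)
  then have Tin: "ereal t \<in> {a<..<y2}" using at by auto
  have cm: "cmod (z x) = dist (\<gamma> a) (\<gamma> (ereal x))" for x
    by (simp add: z_def Cx_norm dist_norm norm_minus_commute)
  have "ereal c \<le> ratio_DS_D \<gamma> a b (ereal t)"
  proof (rule finish[OF ab cont _ _ t(1,2)])
    show "a < ereal t" "ereal t < b" using Tin y2 by auto
    show "\<gamma> (ereal t) \<noteq> \<gamma> a" using False Tin by auto
    show "c * dist (\<gamma> a) (\<gamma> (ereal t)) \<le> dist (\<gamma> a) (\<gamma> (ereal \<tau>))" using t(4) cL cm by simp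
    show "locext (\<lambda>x. Im (cnj (Cx (\<gamma> (ereal t) - \<gamma> a)) * Cx (\<gamma> (ereal x) - \<gamma> a))) \<tau>"
      using t(5) by (simp add: z_def)
  qed
  then show ?thesis using Tin by blast
qed

theorem theorem1:
  fixes \<gamma> :: "ereal \<Rightarrow> real^2" and a b :: ereal
  assumes "a < b"
    and "continuous_on {a..<b} \<gamma>"
    and "\<forall>U. open U \<and> a \<in> U \<longrightarrow> (\<exists>\<tau> \<in> U \<inter> {a..<b}. \<gamma> \<tau> \<noteq> \<gamma> a)"
  shows "Limsup (at a within {a<..<b}) (ratio_DS_D \<gamma> a b) \<ge> ereal (1 / exp 1)"
  unfolding Limsup_def
proof (rule INF_greatest)
  fix P assume "P \<in> {P. eventually P (at a within {a<..<b})}"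
  then obtain S where S: "open S" "a \<in> S" "\<forall>x\<in>S. x \<noteq> a \<longrightarrow> x \<in> {a<..<b} \<longrightarrow> P x"
    by (auto simp: eventually_at_topological)
  obtain y1 where y1: "y1 > a" "{a..<y1} \<subseteq> S" using open_right[OF S(1) S(2) assms(1)] by blast
  define y2 where "y2 = min y1 b"
  have y2: "a < y2" "y2 \<le> b" using y1 assms(1) by (auto simp: y2_def)
  show "ereal (1 / exp 1) \<le> (SUP x\<in>{x. P x}. ratio_DS_D \<gamma> a b x)"
  proof (rule dense_le)
    fix y assume y: "y < ereal (1 / exp 1)"
    obtain c0 where c0: "y < ereal c0" "ereal c0 < ereal (1 / exp 1)" using ereal_dense2[OF y] by blast
    define c where "c = max c0 (1 / (2 * exp 1))"
    have e1: "exp (-1::real) = 1 / exp 1" by (simp add: exp_minus inverse_eq_divide)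
    have h: "0 < 1/(2*exp (1::real))" "1/(2*exp 1) < 1/exp (1::real)" by (auto simp: field_simps)
    have c: "0 < c" "c < exp (-1)" using c0 h by (auto simp: c_def e1 max_def)
    have "c0 \<le> c" by (simp add: c_def)
    then have "ereal c0 \<le> ereal c" by simp
    then have yc: "y \<le> ereal c" using order_trans[OF less_imp_le[OF c0(1)]] by blast
    obtain T where T: "T \<in> {a<..<y2}" "ereal c \<le> ratio_DS_D \<gamma> a b T"
      using key[OF assms(1,2) y2 c] by blast
    have "T \<in> S" using T y1 by (auto simp: y2_def)
    then have "P T" using S T y2 by auto
    then have "ratio_DS_D \<gamma> a b T \<le> (SUP x\<in>{x. P x}. ratio_DS_D \<gamma> a b x)" by (intro SUP_upper) auto
    then show "y \<le> (SUP x\<in>{x. P x}. ratio_DS_D \<gamma> a b x)" using yc T(2) by (meson order_trans)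
  qed
qed

end
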